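(* Let $I$ be a finite index set and $\{(x_i,f_i,g_i)\}_{i\in I}\subset\mathbb{R}^n\times\mathbb{R}\times\mathbb{R}^n$. The following are equivalent: (i) there exists a convex function $f:\mathbb{R}^n\to\mathbb{R}$ which is differentiable and strictly convex and satisfies $f_i=f(x_i)$, $g_i=\nabla f(x_i)$ for all $i\in I$; (ii) for every $i,j\in I$: $f_i-f_j-\langle g_j,x_i-x_j\rangle\ge0$; $f_i-f_j-\langle g_j,x_i-x_j\rangle>0$ if $x_i\ne x_j$; and $f_i-f_j-\langle g_j,x_i-x_j\rangle>0$ if $g_i\ne g_j$. *)

theory Defs
  imports "HOL-Analysis.Analysis"
begin

definition strictly_convex_on :: "'a::real_vector set \<Rightarrow> ('a \<Rightarrow> real) \<Rightarrow> bool" where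
  "strictly_convex_on S f \<longleftrightarrow> convex S \<and>
     (\<forall>x\<in>S. \<forall>y\<in>S. x \<noteq> y \<longrightarrow> (\<forall>t::real. 0 < t \<and> t < 1 \<longrightarrow>
        f ((1 - t) *\<^sub>R x + t *\<^sub>R y) < (1 - t) * f x + t * f y))"

end

theory Submission
  imports Defs
begin


definition pp :: "real \<Rightarrow> real" where "pp s = (max s 0)^2"

lemma pp_deriv: "(pp has_real_derivative 2 * max s 0) (at s)"
proof (cases "s > 0")
  case True
  have "((\<lambda>s. s^2) has_real_derivative 2 * s) (at s)"
    by (auto intro!: derivative_eq_intros)
  then have "((\<lambda>s. s^2) has_real_derivative 2 * max s 0) (at s)" using True by simp
  then show ?thesis
    by (rule has_field_derivative_transform_within_open[where S="{0<..}"]) (use True in \<open>auto simp: pp_def\<close>)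
next
  case False
  show ?thesis
  proof (cases "s < 0")
    case True
    have "((\<lambda>s. 0) has_real_derivative 0) (at s)"
      by (auto intro!: derivative_eq_intros)
    then have "((\<lambda>s. 0) has_real_derivative 2 * max s 0) (at s)" using True by simp
    then show ?thesis
      by (rule has_field_derivative_transform_within_open[where S="{..<0}"]) (use True in \<open>auto simp: pp_def\<close>)
  next
    case False
    with \<open>\<not> s > 0\<close> have s: "s = 0" by simp
    have "((\<lambda>y. (pp y - pp 0) / (y - 0)) \<longlongrightarrow> 0) (at 0)"
    proof (rule Lim_null_comparison)
      show "\<forall>\<^sub>F y in at 0. norm ((pp y - pp 0) / (y - 0)) \<le> \<bar>y\<bar>"
      proof (rule always_eventually, rule allI)
        fix y :: real
        show "norm ((pp y - pp 0) / (y - 0)) \<le> \<bar>y\<bar>"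
        proof (cases "y > 0")
          case True then show ?thesis by (simp add: pp_def power2_eq_square)
        next
          case False then show ?thesis by (simp add: pp_def)
        qed
      qed
      show "((\<lambda>y. \<bar>y\<bar>) \<longlongrightarrow> 0) (at (0::real))"
        using tendsto_rabs[OF tendsto_ident_at, of 0 UNIV] by simp
    qed
    then show ?thesis using s by (simp add: has_field_derivative_iff)
  qed
qed


definition hh :: "real \<Rightarrow> real \<Rightarrow> real" where
  "hh d t = d/2 + t^2/(2*d) - (pp (t - d) + pp (-t - d))/(2*d)"
definition hh' :: "real \<Rightarrow> real \<Rightarrow> real" where
  "hh' d t = (t - max (t-d) 0 + max (-t-d) 0)/d"

lemma hh_deriv:
  assumes d: "d > 0" shows "(hh d has_real_derivative hh' d t) (at t)"
proof -
  have 1: "((\<lambda>t. pp (t - d)) has_real_derivative 2 * max (t - d) 0 * 1) (at t)"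
    by (rule DERIV_chain2[OF pp_deriv]) (auto intro!: derivative_eq_intros)
  have 2: "((\<lambda>t. pp (- t - d)) has_real_derivative 2 * max (- t - d) 0 * (-1)) (at t)"
    by (rule DERIV_chain2[OF pp_deriv]) (auto intro!: derivative_eq_intros)
  have 3: "((\<lambda>t. t^2) has_real_derivative 2 * t) (at t)"
    by (auto intro!: derivative_eq_intros)
  have "((\<lambda>t. d/2 + t^2/(2*d) - (pp (t - d) + pp (-t - d))/(2*d)) has_real_derivative
     0 + (2*t)/(2*d) - (2 * max (t - d) 0 * 1 + 2 * max (- t - d) 0 * (-1))/(2*d)) (at t)"
    by (intro DERIV_diff DERIV_add DERIV_const 1 2 3 DERIV_cdivide) 
  moreover have "0 + (2*t)/(2*d) - (2 * max (t - d) 0 * 1 + 2 * max (- t - d) 0 * (-1))/(2*d) = hh' d t"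
    using d by (simp add: hh'_def field_simps)
  ultimately show ?thesis unfolding hh_def[abs_def] by simp
qed

lemma hh'_mono: "d > 0 \<Longrightarrow> s \<le> t \<Longrightarrow> hh' d s \<le> hh' d t"
  unfolding hh'_def by (rule divide_right_mono) (auto simp: max_def)

lemma hh'_le1: "d > 0 \<Longrightarrow> hh' d t \<le> 1"
  unfolding hh'_def by (auto simp: max_def)

lemma hh_convex: "d > 0 \<Longrightarrow> convex_on UNIV (hh d)"
  by (rule convex_on_realI[where f'="hh' d"]) (auto intro: hh_deriv hh'_mono)

lemma hh_key: fixes d t :: real assumes "d > 0" shows "d/2 + t^2/(2*d) - (t-d)^2/(2*d) = t"
proof -
  have e1: "t^2 - (t-d)^2 = 2*d*t - d*d" by (simp add: power2_eq_square algebra_simps)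
  have "t^2/(2*d) - (t-d)^2/(2*d) = (t^2 - (t-d)^2)/(2*d)" by (simp only: diff_divide_distrib)
  also have "\<dots> = (2*d*t - d*d)/(2*d)" by (simp only: e1)
  also have "\<dots> = t - d/2" using assms by (simp add: field_simps)
  finally show ?thesis by simp
qed

lemma hh_eq_abs: assumes "d > 0" "d \<le> \<bar>t\<bar>" shows "hh d t = \<bar>t\<bar>"
proof (cases "t \<ge> 0")
  case True
  then have "pp (t - d) = (t-d)^2" "pp (-t-d) = 0" using assms by (auto simp: pp_def)
  then have "hh d t = d/2 + t^2/(2*d) - (t-d)^2/(2*d)" by (simp add: hh_def)
  then show ?thesis using assms True hh_key by simp
next
  case False
  then have "pp (-t - d) = (-t-d)^2" "pp (t-d) = 0" using assms by (auto simp: pp_def)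
  then have "hh d t = d/2 + (-t)^2/(2*d) - ((-t)-d)^2/(2*d)" by (simp add: hh_def)
  then show ?thesis using assms False hh_key[of d "-t"] by simp
qed

lemma hh_bounds: assumes "d > 0" shows "\<bar>t\<bar> \<le> hh d t \<and> hh d t \<le> \<bar>t\<bar> + d"
proof (cases "d \<le> \<bar>t\<bar>")
  case True then show ?thesis using hh_eq_abs assms by simp
next
  case False
  then have pz: "pp (t - d) = 0" "pp (-t-d) = 0" by (auto simp: pp_def)
  have e: "hh d t = d/2 + t^2/(2*d)" by (simp add: hh_def pz)
  have h: "2*d*\<bar>t\<bar> \<le> d^2 + t^2" using sum_squares_bound[of d "\<bar>t\<bar>"] by simp
  have "\<bar>t\<bar> \<le> (d^2 + t^2)/(2*d)" using h assms by (simp add: pos_le_divide_eq mult.commute)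
  also have "(d^2+t^2)/(2*d) = d^2/(2*d) + t^2/(2*d)" by (rule add_divide_distrib)
  also have "d^2/(2*d) = d/2" using assms by (simp add: power2_eq_square)
  finally have l: "\<bar>t\<bar> \<le> d/2 + t^2/(2*d)" .
  have "\<bar>t\<bar> \<le> \<bar>d\<bar>" using False assms by simp
  then have "t^2 \<le> d^2" by (simp only: abs_le_square_iff)
  then have "t^2/(2*d) \<le> d^2/(2*d)" using assms by (intro divide_right_mono) auto
  also have "d^2/(2*d) = d/2" using assms by (simp add: power2_eq_square)
  finally have u: "d/2 + t^2/(2*d) \<le> d" by simp
  show ?thesis using e l u abs_ge_zero[of t] by linarith
qed

lemma hh_sub_mono: assumes "d > 0" "s \<le> t" shows "hh d t - t \<le> hh d s - s"
proof (rule DERIV_nonpos_imp_nonincreasing[OF assms(2)])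
  fix x assume "s \<le> x" "x \<le> t"
  show "\<exists>y. ((\<lambda>t. hh d t - t) has_real_derivative y) (at x) \<and> y \<le> 0"
    using hh_deriv[OF assms(1), of x] hh'_le1[OF assms(1), of x]
    by (auto intro!: exI[of _ "hh' d x - 1"] derivative_eq_intros)
qed

definition mm :: "real \<Rightarrow> real \<Rightarrow> real \<Rightarrow> real" where
  "mm d a b = (a + b)/2 + hh d (a - b)/2"

lemma mm_twice: "2 * mm d a b = a + b + hh d (a - b)"
  unfolding mm_def by simp

lemma mm_mono2: assumes "d > 0" "b \<le> b'" shows "mm d a b \<le> mm d a b'"
proof -
  have "hh d (a - b) - (a - b) \<le> hh d (a - b') - (a - b')"
    using hh_sub_mono[OF assms(1), of "a - b'" "a - b"] assms by simp
  then show ?thesis using mm_twice[of d a b] mm_twice[of d a b'] by linarith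
qed

lemma mm_bounds: assumes "d > 0" shows "max a b \<le> mm d a b \<and> mm d a b \<le> max a b + d"
proof (cases "a \<le> b")
  case True
  then have m: "max a b = b" "\<bar>a - b\<bar> = b - a" by auto
  show ?thesis using hh_bounds[OF assms, of "a - b"] m mm_twice[of d a b] by linarith
next
  case False
  then have m: "max a b = a" "\<bar>a - b\<bar> = a - b" by auto
  show ?thesis using hh_bounds[OF assms, of "a - b"] m mm_twice[of d a b] by linarith
qed

lemma mm_eq1: assumes "d > 0" "b + d \<le> a" shows "mm d a b = a"
proof -
  have "hh d (a - b) = a - b" using hh_eq_abs[of d "a - b"] assms by simp
  then show ?thesis using mm_twice[of d a b] by linarith
qed

lemma mm_eq2: assumes "d > 0" "a + d \<le> b" shows "mm d a b = b"
proof -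
  have "hh d (a - b) = b - a" using hh_eq_abs[of d "a - b"] assms by simp
  then show ?thesis using mm_twice[of d a b] by linarith
qed

lemma mm_convex:
  assumes d: "d > 0" and t: "0 \<le> t" "t \<le> 1"
  shows "mm d ((1-t)*a + t*a') ((1-t)*b + t*b') \<le> (1-t) * mm d a b + t * mm d a' b'"
proof -
  have "hh d ((1-t) *\<^sub>R (a-b) + t *\<^sub>R (a'-b')) \<le> (1-t) * hh d (a-b) + t * hh d (a'-b')"
    using convex_onD[OF hh_convex[OF d]] t by blast
  moreover have "(1-t)*a + t*a' - ((1-t)*b + t*b') = (1-t) *\<^sub>R (a-b) + t *\<^sub>R (a'-b')"
    by (simp add: algebra_simps)
  ultimately have H: "hh d ((1-t)*a + t*a' - ((1-t)*b + t*b')) \<le> (1-t) * hh d (a-b) + t * hh d (a'-b')"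
    by simp
  have E: "2 * ((1-t) * mm d a b + t * mm d a' b') = (1-t) * (2 * mm d a b) + t * (2 * mm d a' b')"
    by (simp add: algebra_simps)
  also have "\<dots> = (1-t) * (a + b + hh d (a - b)) + t * (a' + b' + hh d (a' - b'))"
    by (simp only: mm_twice)
  also have "\<dots> = ((1-t)*a + t*a') + ((1-t)*b + t*b') + ((1-t) * hh d (a-b) + t * hh d (a'-b'))"
    by (simp add: algebra_simps)
  finally have E2: "2 * ((1-t) * mm d a b + t * mm d a' b') =
     ((1-t)*a + t*a') + ((1-t)*b + t*b') + ((1-t) * hh d (a-b) + t * hh d (a'-b'))" .
  have "2 * mm d ((1-t)*a + t*a') ((1-t)*b + t*b') \<le> 2 * ((1-t) * mm d a b + t * mm d a' b')"
    unfolding mm_twice E2 using H by (rule add_left_mono)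
  then show ?thesis by simp
qed

fun G :: "real \<Rightarrow> real list \<Rightarrow> real" where
  "G d [] = 0"
| "G d [a] = a"
| "G d (a # b # r) = mm d a (G d (b # r))"

lemma G_upper: "(d::real) > 0 \<Longrightarrow> as \<noteq> [] \<Longrightarrow> \<forall>b\<in>set as. b \<le> M \<Longrightarrow> G d as \<le> M + real (length as) * d"
proof (induction d as rule: G.induct)
  case (3 d a b r)
  have 1: "G d (b # r) \<le> M + length (b # r) * d" using 3 by auto
  have 2: "real (length (a # b # r)) * d = real (length (b#r)) * d + d" by (simp add: algebra_simps)
  have 4: "0 \<le> real (length (b#r)) * d" using 3 by simp
  have 5: "a \<le> M" using 3 by simp
  show ?case using mm_bounds[of d a "G d (b # r)"] 1 2 4 5 3(2) unfolding G.simps by (smt (verit))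
qed auto

lemma G_pick:
  fixes d :: real
  assumes d: "d > 0"
  shows "\<forall>b\<in>set pre \<union> set post. b + real (length (pre @ a # post)) * d \<le> a \<Longrightarrow> G d (pre @ a # post) = a"
proof (induction pre)
  case Nil
  show ?case
  proof (cases post)
    case Nil then show ?thesis by simp
  next
    case (Cons b r)
    have "G d (b # r) \<le> (a - real (length (a # b # r)) * d) + real (length (b # r)) * d"
      by (rule G_upper) (use d Nil Cons in auto)
    then have "G d (b # r) + d \<le> a" by (simp add: algebra_simps)
    then show ?thesis using Cons mm_eq1[OF d] by simp
  qed
next
  case (Cons p pre)
  obtain b r where br: "pre @ a # post = b # r" by (cases "pre @ a # post") auto
  have IH: "G d (pre @ a # post) = a"
    using Cons.prems d by (intro Cons.IH) (auto intro: order_trans[rotated] mult_right_mono)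
  have p1: "p + real (length ((p # pre) @ a # post)) * d \<le> a" using Cons.prems by simp
  have p2: "1 * d \<le> real (length ((p # pre) @ a # post)) * d" using d by (intro mult_right_mono) auto
  have "p + 1 * d \<le> a" using p1 p2 by linarith
  then show ?case using br IH mm_eq2[OF d] by simp
qed



definition FF :: "real \<Rightarrow> (real \<times> 'a::real_inner) list \<Rightarrow> 'a \<Rightarrow> real" where
  "FF d ps y = G d (map (\<lambda>(c,v). c + inner v y) ps)"

lemma FF_Cons2: "FF d ((c,v) # q # r) y = mm d (c + inner v y) (FF d (q # r) y)"
  unfolding FF_def by (cases q) simp

lemma affine_comb: "c + inner v ((1-t) *\<^sub>R x + t *\<^sub>R y) = (1-t) * (c + inner v x) + t * (c + inner v y)"
  by (simp add: inner_add_right algebra_simps)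

lemma FF_convex: assumes d: "d > 0" shows "convex_on UNIV (FF d ps)"
proof (induction ps rule: induct_list012)
  case 1 then show ?case by (simp add: FF_def convex_on_const)
next
  case (2 p)
  obtain c v where p: "p = (c,v)" by (cases p)
  show ?case
  proof (rule convex_onI)
    fix t x y :: 'a
    show "FF d [p] ((1 - t) *\<^sub>R x + t *\<^sub>R y) \<le> (1 - t) * FF d [p] x + t * FF d [p] y"
      for t :: real using affine_comb[of c v t x y] by (simp add: FF_def p)
  qed simp
next
  case (3 p q r)
  obtain c v where p: "p = (c,v)" by (cases p)
  show ?case
  proof (rule convex_onI)
    fix t :: real and x y :: 'a
    assume t: "0 < t" "t < 1"
    let ?F = "FF d (q # r)"
    have "?F ((1 - t) *\<^sub>R x + t *\<^sub>R y) \<le> (1 - t) * ?F x + t * ?F y"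
      using convex_onD[OF "3.IH"(2)] t by simp
    then have "mm d (c + inner v ((1 - t) *\<^sub>R x + t *\<^sub>R y)) (?F ((1 - t) *\<^sub>R x + t *\<^sub>R y))
       \<le> mm d ((1-t) * (c + inner v x) + t * (c + inner v y)) ((1 - t) * ?F x + t * ?F y)"
      unfolding affine_comb by (rule mm_mono2[OF d])
    also have "\<dots> \<le> (1-t) * mm d (c + inner v x) (?F x) + t * mm d (c + inner v y) (?F y)"
      using t by (intro mm_convex[OF d]) auto
    finally show "FF d (p # q # r) ((1 - t) *\<^sub>R x + t *\<^sub>R y) \<le> (1 - t) * FF d (p # q # r) x + t * FF d (p # q # r) y"
      unfolding p FF_Cons2 .
  qed simp
qed

lemma hh_differentiable: "d > 0 \<Longrightarrow> hh d differentiable (at t)"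
  using hh_deriv[of d t] real_differentiable_def by blast

lemma FF_diff: assumes d: "d > 0" shows "FF d ps differentiable (at y)"
proof (induction ps rule: induct_list012)
  case 1 then show ?case by (simp add: FF_def)
next
  case (2 p)
  obtain c v where p: "p = (c,v)" by (cases p)
  have "(\<lambda>y. c + inner v y) differentiable (at y)" by simp
  then show ?case by (simp add: FF_def p)
next
  case (3 p q r)
  obtain c v where p: "p = (c,v)" by (cases p)
  let ?F = "FF d (q # r)"
  have F: "?F differentiable (at y)" by fact
  have e: "FF d (p # q # r) = (\<lambda>y. ((c + inner v y) + ?F y)/2 + hh d ((c + inner v y) - ?F y) / 2)"
    by (rule ext) (simp add: p FF_Cons2 mm_def)
  have "(\<lambda>y. hh d ((c + inner v y) - ?F y)) differentiable (at y)"
    by (rule differentiable_compose[OF hh_differentiable[OF d]]) (use F in simp)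
  then show ?case unfolding e using F by simp
qed



lemma exists_small:
  fixes a b :: "'t \<Rightarrow> real"
  assumes "finite T" "\<forall>t\<in>T. 0 < a t \<and> 0 < b t"
  shows "\<exists>e>0. \<forall>t\<in>T. e * a t < b t"
proof -
  define m where "m = Min (insert 1 ((\<lambda>t. b t / a t) ` T))"
  have mpos: "m > 0" unfolding m_def using assms by (subst Min_gr_iff) auto
  have "\<forall>t\<in>T. m / 2 * a t < b t"
  proof
    fix t assume t: "t \<in> T"
    have "m \<le> b t / a t" unfolding m_def using assms t by (intro Min_le) auto
    then have "m * a t \<le> b t" using assms t by (simp add: pos_le_divide_eq)
    moreover have "m / 2 * a t < m * a t" using mpos assms t by simp
    ultimately show "m / 2 * a t < b t" by linarith
  qed
  then show ?thesis using mpos by (intro exI[of _ "m/2"]) auto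
qed

lemma interp_core:
  fixes I :: "'i set" and x :: "'i \<Rightarrow> 'a::real_inner" and fv :: "'i \<Rightarrow> real" and g :: "'i \<Rightarrow> 'a"
  assumes fin: "finite I"
   and D1: "\<forall>i\<in>I. \<forall>j\<in>I. x i \<noteq> x j \<longrightarrow> fv i - fv j - inner (g j) (x i - x j) > 0"
   and D2: "\<forall>i\<in>I. \<forall>j\<in>I. x i = x j \<longrightarrow> fv i = fv j \<and> g i = g j"
  shows "\<exists>F. convex_on UNIV F \<and> (\<forall>y. F differentiable (at y)) \<and>
            (\<forall>i\<in>I. fv i = F (x i) \<and> GDERIV F (x i) :> g i)"
proof -
  define pr where "pr i = (fv i - inner (g i) (x i), g i)" for i
  define \<phi> :: "real \<times> 'a \<Rightarrow> 'a \<Rightarrow> real" where "\<phi> q y = fst q + inner (snd q) y" for q y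
  obtain ps where ps: "set ps = pr ` I" "distinct ps"
    using finite_distinct_list[of "pr ` I"] fin by auto
  define K where "K = length ps"
  have fin2: "finite {(i,j). i \<in> I \<and> j \<in> I \<and> x i \<noteq> x j}"
    by (rule finite_subset[of _ "I \<times> I"]) (use fin in auto)
  obtain \<delta> where \<delta>: "\<delta> > 0"
    "\<forall>t\<in>{(i,j). i \<in> I \<and> j \<in> I \<and> x i \<noteq> x j}. \<delta> * (real K + 1) < fv (fst t) - fv (snd t) - inner (g (snd t)) (x (fst t) - x (snd t))"
    using exists_small[of "{(i,j). i \<in> I \<and> j \<in> I \<and> x i \<noteq> x j}" "\<lambda>t. real K + 1"
        "\<lambda>t. fv (fst t) - fv (snd t) - inner (g (snd t)) (x (fst t) - x (snd t))"] fin2 D1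
    by auto
  have \<delta>': "real K * \<delta> < fv i - fv j - inner (g j) (x i - x j)" if "i \<in> I" "j \<in> I" "x i \<noteq> x j" for i j
  proof -
    have "\<delta> * (real K + 1) < fv i - fv j - inner (g j) (x i - x j)" using \<delta>(2) that by auto
    moreover have "real K * \<delta> \<le> \<delta> * (real K + 1)" using \<delta>(1) by (simp add: algebra_simps)
    ultimately show ?thesis by linarith
  qed
  define F where "F = FF \<delta> ps"
  have FF_eq: "F y = G \<delta> (map (\<lambda>q. \<phi> q y) ps)" for y
    unfolding F_def FF_def \<phi>_def by (rule arg_cong[where f="G \<delta>"], rule map_cong) auto
  have loc: "fv i = F (x i) \<and> GDERIV F (x i) :> g i" if i: "i \<in> I" for i
  proof -
    have "pr i \<in> set ps" using ps i by auto
    then obtain pre post where split: "ps = pre @ pr i # post" by (meson split_list)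
    have notin: "pr i \<notin> set pre \<union> set post" using ps(2) split by auto
    define Q where "Q = set pre \<union> set post"
    define U where "U = (\<Inter>q\<in>Q. {y. \<phi> q y + real K * \<delta> < \<phi> (pr i) y})"
    have openU: "open U" unfolding U_def Q_def \<phi>_def
      by (intro open_INT ballI open_Collect_less) (auto intro!: continuous_intros)
    have xU: "x i \<in> U"
    proof -
      have "\<phi> q (x i) + real K * \<delta> < \<phi> (pr i) (x i)" if q: "q \<in> Q" for q
      proof -
        have "q \<in> pr ` I" using q ps split unfolding Q_def by auto
        then obtain j where j: "j \<in> I" "q = pr j" by auto
        have qne: "q \<noteq> pr i" using notin q unfolding Q_def by auto
        have xne: "x i \<noteq> x j"
        proof
          assume e: "x i = x j"
          then have "fv i = fv j" "g i = g j" using D2 i j(1) by blast+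
          then have "pr j = pr i" using e by (simp add: pr_def)
          then show False using qne j(2) by simp
        qed
        have "\<phi> (pr i) (x i) = fv i" by (simp add: \<phi>_def pr_def)
        moreover have "\<phi> q (x i) = fv j + inner (g j) (x i - x j)"
          by (simp add: \<phi>_def pr_def j inner_diff_right)
        ultimately show ?thesis using \<delta>'[OF i j(1) xne] by linarith
      qed
      then show ?thesis unfolding U_def by blast
    qed
    have onU: "F y = \<phi> (pr i) y" if y: "y \<in> U" for y
    proof -
      have "F y = G \<delta> (map (\<lambda>q. \<phi> q y) pre @ \<phi> (pr i) y # map (\<lambda>q. \<phi> q y) post)"
        unfolding FF_eq split by simp
      also have "\<dots> = \<phi> (pr i) y"
      proof (rule G_pick[OF \<delta>(1)], rule ballI)
        fix b assume b: "b \<in> set (map (\<lambda>q. \<phi> q y) pre) \<union> set (map (\<lambda>q. \<phi> q y) post)"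
        then obtain q where q: "q \<in> Q" "b = \<phi> q y" unfolding Q_def by auto
        have len: "length (map (\<lambda>q. \<phi> q y) pre @ \<phi> (pr i) y # map (\<lambda>q. \<phi> q y) post) = K"
          unfolding K_def split by simp
        show "b + real (length (map (\<lambda>q. \<phi> q y) pre @ \<phi> (pr i) y # map (\<lambda>q. \<phi> q y) post)) * \<delta> \<le> \<phi> (pr i) y"
        proof -
          have "y \<in> {y. \<phi> q y + real K * \<delta> < \<phi> (pr i) y}"
            using y q(1) unfolding U_def by (rule InterD[OF _ imageI])
          then have "\<phi> q y + real K * \<delta> < \<phi> (pr i) y" by (rule CollectD)
          then show ?thesis using q(2) len by simp
        qed
      qed
      finally show ?thesis .
    qed
    have "fv i = F (x i)" using onU[OF xU] by (simp add: \<phi>_def pr_def)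
    moreover have "GDERIV F (x i) :> g i"
    proof -
      have "((\<phi> (pr i)) has_derivative (\<lambda>h. inner h (g i))) (at (x i))"
        unfolding \<phi>_def pr_def by (auto intro!: derivative_eq_intros simp: inner_commute)
      then have "(F has_derivative (\<lambda>h. inner h (g i))) (at (x i))"
        by (rule has_derivative_transform_within_open[OF _ openU xU]) (simp add: onU)
      then show ?thesis by (simp add: gderiv_def)
    qed
    ultimately show ?thesis by simp
  qed
  have "convex_on UNIV F" unfolding F_def by (rule FF_convex[OF \<delta>(1)])
  moreover have "\<forall>y. F differentiable (at y)" unfolding F_def using FF_diff[OF \<delta>(1)] by blast
  ultimately show ?thesis using loc by blast
qed



lemma tangent_ineq:
  fixes f :: "'a::real_inner \<Rightarrow> real"
  assumes cv: "convex_on UNIV f" and der: "GDERIV f x :> g"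
  shows "f x + inner g (y - x) \<le> f y"
proof -
  define \<psi> where "\<psi> t = f (x + t *\<^sub>R (y - x))" for t :: real
  have "convex_on UNIV \<psi>"
  proof (rule convex_onI)
    fix t a b :: real assume t: "0 < t" "t < 1"
    have "x + ((1 - t) *\<^sub>R a + t *\<^sub>R b) *\<^sub>R (y - x) =
        (1 - t) *\<^sub>R (x + a *\<^sub>R (y - x)) + t *\<^sub>R (x + b *\<^sub>R (y - x))"
      by (simp add: algebra_simps)
    then show "\<psi> ((1 - t) *\<^sub>R a + t *\<^sub>R b) \<le> (1 - t) * \<psi> a + t * \<psi> b"
      unfolding \<psi>_def using convex_onD[OF cv, of t] t by simp
  qed simp
  moreover have "(\<psi> has_field_derivative inner (y - x) g) (at 0)"
  proof -
    have d1: "((\<lambda>t::real. x + t *\<^sub>R (y - x)) has_derivative (\<lambda>t. t *\<^sub>R (y - x))) (at 0)"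
      by (auto intro!: derivative_eq_intros)
    have d2: "(f has_derivative (\<lambda>h. inner h g)) (at (x + 0 *\<^sub>R (y - x)))"
      using der by (simp add: gderiv_def)
    have "(\<psi> has_derivative (\<lambda>t. inner (t *\<^sub>R (y - x)) g)) (at 0)"
      unfolding \<psi>_def using has_derivative_compose[OF d1 d2] by (simp add: o_def)
    moreover have "(\<lambda>t. inner (t *\<^sub>R (y - x)) g) = (\<lambda>t. inner (y - x) g * t)"
      by (auto simp: mult.commute)
    ultimately show ?thesis by (simp add: has_field_derivative_def)
  qed
  ultimately have "inner (y - x) g * (1 - 0) \<le> \<psi> 1 - \<psi> 0"
    by (intro convex_on_imp_above_tangent[of UNIV]) auto
  then show ?thesis unfolding \<psi>_def by (simp add: inner_commute)
qed

lemma quad_id: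
  fixes a b :: "'a::real_inner"
  shows "inner ((1-t) *\<^sub>R a + t *\<^sub>R b) ((1-t) *\<^sub>R a + t *\<^sub>R b) =
    (1-t) * inner a a + t * inner b b - t * (1 - t) * inner (a - b) (a - b)"
  by (simp add: inner_add_left inner_add_right inner_diff_left inner_diff_right inner_commute algebra_simps)

lemma quad_gderiv:
  fixes y :: "'a::real_inner"
  shows "GDERIV (\<lambda>y. e / 2 * inner y y) y :> e *\<^sub>R y"
proof -
  have "((\<lambda>y. e / 2 * inner y y) has_derivative (\<lambda>h. e / 2 * (inner h y + inner y h))) (at y)"
    by (auto intro!: derivative_eq_intros)
  moreover have "(\<lambda>h. e / 2 * (inner h y + inner y h)) = (\<lambda>h. inner h (e *\<^sub>R y))"
    by (auto simp: inner_commute algebra_simps)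
  ultimately show ?thesis by (simp add: gderiv_def)
qed



theorem proposition4p2:
  fixes I :: "'i set"
    and x :: "'i \<Rightarrow> real ^ 'n"
    and fv :: "'i \<Rightarrow> real"
    and g :: "'i \<Rightarrow> real ^ 'n"
  assumes "finite I"
  shows "(\<exists>f :: real ^ 'n \<Rightarrow> real.
            convex_on UNIV f \<and> (\<forall>y. f differentiable (at y)) \<and>
            strictly_convex_on UNIV f \<and>
            (\<forall>i\<in>I. fv i = f (x i) \<and> GDERIV f (x i) :> g i))
     \<longleftrightarrow>
         (\<forall>i\<in>I. \<forall>j\<in>I.
            fv i - fv j - g j \<bullet> (x i - x j) \<ge> 0 \<and>
            (x i \<noteq> x j \<longrightarrow> fv i - fv j - g j \<bullet> (x i - x j) > 0) \<and>
            (g i \<noteq> g j \<longrightarrow> fv i - fv j - g j \<bullet> (x i - x j) > 0))"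
proof
  assume "\<exists>f :: real ^ 'n \<Rightarrow> real.
            convex_on UNIV f \<and> (\<forall>y. f differentiable (at y)) \<and>
            strictly_convex_on UNIV f \<and>
            (\<forall>i\<in>I. fv i = f (x i) \<and> GDERIV f (x i) :> g i)"
  then obtain f :: "real ^ 'n \<Rightarrow> real" where cv: "convex_on UNIV f"
    and sc: "strictly_convex_on UNIV f" and ip: "\<forall>i\<in>I. fv i = f (x i) \<and> GDERIV f (x i) :> g i"
    by blast
  show "\<forall>i\<in>I. \<forall>j\<in>I.
            fv i - fv j - g j \<bullet> (x i - x j) \<ge> 0 \<and>
            (x i \<noteq> x j \<longrightarrow> fv i - fv j - g j \<bullet> (x i - x j) > 0) \<and>
            (g i \<noteq> g j \<longrightarrow> fv i - fv j - g j \<bullet> (x i - x j) > 0)"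
  proof (intro ballI)
    fix i j assume i: "i \<in> I" and j: "j \<in> I"
    have fi: "fv i = f (x i)" and gi: "GDERIV f (x i) :> g i" using ip i by auto
    have fj: "fv j = f (x j)" and gj: "GDERIV f (x j) :> g j" using ip j by auto
    have ge: "fv i - fv j - g j \<bullet> (x i - x j) \<ge> 0"
      using tangent_ineq[OF cv gj, of "x i"] fi fj by simp
    have strict: "fv i - fv j - g j \<bullet> (x i - x j) > 0" if ne: "x i \<noteq> x j"
    proof -
      define m where "m = (1 - 1/2) *\<^sub>R x j + (1/2::real) *\<^sub>R x i"
      have "\<forall>t. 0 < t \<and> t < 1 \<longrightarrow> f ((1 - t) *\<^sub>R x j + t *\<^sub>R x i) < (1 - t) * f (x j) + t * f (x i)"
        using sc ne unfolding strictly_convex_on_def by auto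
      from this[rule_format, of "1/2"] have "f m < (1 - 1/2) * f (x j) + (1/2) * f (x i)"
        unfolding m_def by simp
      moreover have "f (x j) + g j \<bullet> (m - x j) \<le> f m" by (rule tangent_ineq[OF cv gj])
      moreover have "g j \<bullet> (m - x j) = (1/2) * (g j \<bullet> (x i - x j))"
        unfolding m_def by (simp add: inner_diff_right inner_add_right algebra_simps)
      ultimately show ?thesis using fi fj by simp
    qed
    have "x i \<noteq> x j" if "g i \<noteq> g j"
    proof
      assume e: "x i = x j"
      have "(f has_derivative (\<lambda>h. h \<bullet> g i)) (at (x i))" using gi by (simp add: gderiv_def)
      moreover have "(f has_derivative (\<lambda>h. h \<bullet> g j)) (at (x i))" using gj e by (simp add: gderiv_def)
      ultimately have "(\<lambda>h. h \<bullet> g i) = (\<lambda>h. h \<bullet> g j)" by (rule has_derivative_unique)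
      then have "(g i - g j) \<bullet> g i = (g i - g j) \<bullet> g j" by metis
      then have "(g i - g j) \<bullet> (g i - g j) = 0" by (simp add: inner_diff_right)
      then show False using that by simp
    qed
    then show "fv i - fv j - g j \<bullet> (x i - x j) \<ge> 0 \<and>
            (x i \<noteq> x j \<longrightarrow> fv i - fv j - g j \<bullet> (x i - x j) > 0) \<and>
            (g i \<noteq> g j \<longrightarrow> fv i - fv j - g j \<bullet> (x i - x j) > 0)"
      using ge strict by blast
  qed
next
  assume H: "\<forall>i\<in>I. \<forall>j\<in>I.
            fv i - fv j - g j \<bullet> (x i - x j) \<ge> 0 \<and>
            (x i \<noteq> x j \<longrightarrow> fv i - fv j - g j \<bullet> (x i - x j) > 0) \<and>
            (g i \<noteq> g j \<longrightarrow> fv i - fv j - g j \<bullet> (x i - x j) > 0)"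
  have D2: "fv i = fv j \<and> g i = g j" if i: "i \<in> I" and j: "j \<in> I" and e: "x i = x j" for i j
  proof -
    have "fv i - fv j - g j \<bullet> (x i - x j) \<ge> 0" using H i j by blast
    moreover have "fv j - fv i - g i \<bullet> (x j - x i) \<ge> 0" using H i j by blast
    ultimately have "fv i - fv j \<ge> 0" "fv j - fv i \<ge> 0" using e by auto
    then have fe: "fv i = fv j" by simp
    have "\<not> (fv i - fv j - g j \<bullet> (x i - x j) > 0)" using fe e by simp
    then have "g i = g j" using H i j by blast
    then show ?thesis using fe by simp
  qed
  have fin2: "finite {(i,j). i \<in> I \<and> j \<in> I \<and> x i \<noteq> x j}"
    by (rule finite_subset[of _ "I \<times> I"]) (use assms in auto)
  have pos: "\<forall>t\<in>{(i,j). i \<in> I \<and> j \<in> I \<and> x i \<noteq> x j}.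
     0 < inner (x (fst t) - x (snd t)) (x (fst t) - x (snd t)) \<and>
     0 < 2 * (fv (fst t) - fv (snd t) - inner (g (snd t)) (x (fst t) - x (snd t)))"
  proof
    fix t assume "t \<in> {(i,j). i \<in> I \<and> j \<in> I \<and> x i \<noteq> x j}"
    then obtain i j where t: "t = (i,j)" "i \<in> I" "j \<in> I" "x i \<noteq> x j" by auto
    have "fv i - fv j - g j \<bullet> (x i - x j) > 0" using H t by blast
    then show "0 < inner (x (fst t) - x (snd t)) (x (fst t) - x (snd t)) \<and>
     0 < 2 * (fv (fst t) - fv (snd t) - inner (g (snd t)) (x (fst t) - x (snd t)))"
      using t by simp
  qed
  obtain \<epsilon> :: real where \<epsilon>: "\<epsilon> > 0"
    "\<forall>t\<in>{(i,j). i \<in> I \<and> j \<in> I \<and> x i \<noteq> x j}. \<epsilon> * inner (x (fst t) - x (snd t)) (x (fst t) - x (snd t))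
        < 2 * (fv (fst t) - fv (snd t) - inner (g (snd t)) (x (fst t) - x (snd t)))"
    using exists_small[OF fin2 pos] by blast
  define fv' where "fv' i = fv i - \<epsilon> / 2 * inner (x i) (x i)" for i
  define g' where "g' i = g i - \<epsilon> *\<^sub>R x i" for i
  have D1': "fv' i - fv' j - inner (g' j) (x i - x j) > 0"
    if i: "i \<in> I" and j: "j \<in> I" and ne: "x i \<noteq> x j" for i j
  proof -
    have "fv' i - fv' j - inner (g' j) (x i - x j) =
        (fv i - fv j - inner (g j) (x i - x j)) - \<epsilon> / 2 * inner (x i - x j) (x i - x j)"
    proof -
      have e1: "inner (g' j) (x i - x j) = inner (g j) (x i - x j) - \<epsilon> * (inner (x j) (x i) - inner (x j) (x j))"
        unfolding g'_def by (simp add: inner_diff_left inner_diff_right right_diff_distrib)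
      have e2: "inner (x i - x j) (x i - x j) = inner (x i) (x i) - 2 * inner (x j) (x i) + inner (x j) (x j)"
        by (simp add: inner_diff_left inner_diff_right inner_commute)
      show ?thesis unfolding fv'_def e1 e2 by (simp add: algebra_simps)
    qed
    moreover have "\<epsilon> * inner (x i - x j) (x i - x j) < 2 * (fv i - fv j - inner (g j) (x i - x j))"
      using \<epsilon>(2) i j ne by auto
    ultimately show ?thesis by simp
  qed
  have D1'': "\<forall>i\<in>I. \<forall>j\<in>I. x i \<noteq> x j \<longrightarrow> fv' i - fv' j - inner (g' j) (x i - x j) > 0"
    using D1' by blast
  have D2'': "\<forall>i\<in>I. \<forall>j\<in>I. x i = x j \<longrightarrow> fv' i = fv' j \<and> g' i = g' j"
  proof (intro ballI impI)
    fix i j assume ij: "i \<in> I" "j \<in> I" "x i = x j"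
    then have "fv i = fv j \<and> g i = g j" by (rule D2)
    then show "fv' i = fv' j \<and> g' i = g' j" using ij(3) unfolding fv'_def g'_def by simp
  qed
  obtain F where F: "convex_on UNIV F" "\<forall>y. F differentiable (at y)"
    "\<forall>i\<in>I. fv' i = F (x i) \<and> GDERIV F (x i) :> g' i"
    using interp_core[OF assms D1'' D2''] by blast
  define f where "f y = F y + \<epsilon> / 2 * inner y y" for y :: "real ^ 'n"
  have key: "f ((1-t) *\<^sub>R a + t *\<^sub>R b) \<le> (1-t) * f a + t * f b - \<epsilon> / 2 * (t * (1 - t) * inner (a - b) (a - b))"
    if t: "0 \<le> t" "t \<le> 1" for t a b
  proof -
    have "F ((1-t) *\<^sub>R a + t *\<^sub>R b) \<le> (1-t) * F a + t * F b" using convex_onD[OF F(1)] t by simp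
    moreover have "(1-t) * (F a + \<epsilon> / 2 * inner a a) + t * (F b + \<epsilon> / 2 * inner b b)
        - \<epsilon> / 2 * (t * (1 - t) * inner (a - b) (a - b))
        - (F ((1-t) *\<^sub>R a + t *\<^sub>R b) + \<epsilon> / 2 * ((1-t) * inner a a + t * inner b b - t * (1 - t) * inner (a - b) (a - b)))
        = (1-t) * F a + t * F b - F ((1-t) *\<^sub>R a + t *\<^sub>R b)"
      by (simp add: field_simps)
    ultimately show ?thesis unfolding f_def quad_id by linarith
  qed
  have sc: "strictly_convex_on UNIV f"
    unfolding strictly_convex_on_def
  proof (intro conjI ballI impI allI)
    fix a b :: "real ^ 'n" and t :: real
    assume ne: "a \<noteq> b" and t: "0 < t \<and> t < 1"
    have "0 < inner (a - b) (a - b)" using ne by simp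
    then have "0 < \<epsilon> / 2 * (t * (1 - t) * inner (a - b) (a - b))" using t \<epsilon>(1) by simp
    then show "f ((1 - t) *\<^sub>R a + t *\<^sub>R b) < (1 - t) * f a + t * f b" using key[of t a b] t by linarith
  qed simp
  have cv: "convex_on UNIV f"
  proof (rule convex_onI)
    fix t :: real and a b :: "real ^ 'n" assume t: "0 < t" "t < 1"
    have "0 \<le> \<epsilon> / 2 * (t * (1 - t) * inner (a - b) (a - b))" using t \<epsilon>(1) by simp
    then show "f ((1 - t) *\<^sub>R a + t *\<^sub>R b) \<le> (1 - t) * f a + t * f b" using key[of t a b] t by linarith
  qed simp
  have diff: "\<forall>y. f differentiable (at y)"
  proof
    fix y :: "real ^ 'n"
    have "(\<lambda>y. \<epsilon> / 2 * inner y y) differentiable (at y)"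
      using quad_gderiv[of \<epsilon> y] unfolding gderiv_def differentiable_def by blast
    then show "f differentiable (at y)" unfolding f_def[abs_def] using F(2) by simp
  qed
  have ip: "\<forall>i\<in>I. fv i = f (x i) \<and> GDERIV f (x i) :> g i"
  proof
    fix i assume i: "i \<in> I"
    have "fv i = f (x i)" using F(3) i unfolding f_def fv'_def by auto
    moreover have "GDERIV f (x i) :> g' i + \<epsilon> *\<^sub>R x i"
      unfolding f_def[abs_def] using F(3) i quad_gderiv by (intro GDERIV_add) auto
    moreover have "g' i + \<epsilon> *\<^sub>R x i = g i" by (simp add: g'_def)
    ultimately show "fv i = f (x i) \<and> GDERIV f (x i) :> g i" by simp
  qed
  show "\<exists>f :: real ^ 'n \<Rightarrow> real.
            convex_on UNIV f \<and> (\<forall>y. f differentiable (at y)) \<and>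
            strictly_convex_on UNIV f \<and>
            (\<forall>i\<in>I. fv i = f (x i) \<and> GDERIV f (x i) :> g i)"
    using cv diff sc ip by blast
qed

end
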